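(* A graph $G$ is an iso-unique Grundy domination graph if and only if each connected component of $G$ is a complete graph.
   Context: For a graph $G$, $N(v)$ is the open neighborhood and $N[v]=N(v)\cup\{v\}$ the closed neighborhood of $v$. A sequence $(v_1,\ldots,v_k)$ of distinct vertices is a closed neighborhood sequence if $N[v_i]\setminus\bigcup_{j=1}^{i-1}N[v_j]\neq\emptyset$ for each $i\in[k]$. The Grundy domination number $\gamma_{gr}(G)$ is the maximum length of a closed neighborhood sequence; the set of vertices of a closed neighborhood sequence of length $\gamma_{gr}(G)$ is a Grundy dominating set. $G$ is an iso-unique Grundy domination graph if for every two Grundy dominating sets $A,B$ of $G$ there is an automorphism $\phi$ of $G$ with $\phi(A)=B$. *)

theory Defs
  imports Main
begin

definition graph :: "'a set \<Rightarrow> ('a \<Rightarrow> 'a \<Rightarrow> bool) \<Rightarrow> bool" where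
  "graph V E \<longleftrightarrow> finite V \<and> (\<forall>u v. E u v \<longrightarrow> u \<in> V \<and> v \<in> V)
     \<and> (\<forall>u v. E u v \<longrightarrow> E v u) \<and> (\<forall>v. \<not> E v v)"

definition open_nbhd :: "'a set \<Rightarrow> ('a \<Rightarrow> 'a \<Rightarrow> bool) \<Rightarrow> 'a \<Rightarrow> 'a set" where
  "open_nbhd V E v = {u \<in> V. E v u}"

definition closed_nbhd :: "'a set \<Rightarrow> ('a \<Rightarrow> 'a \<Rightarrow> bool) \<Rightarrow> 'a \<Rightarrow> 'a set" where
  "closed_nbhd V E v = insert v (open_nbhd V E v)"

definition cn_seq :: "'a set \<Rightarrow> ('a \<Rightarrow> 'a \<Rightarrow> bool) \<Rightarrow> 'a list \<Rightarrow> bool" where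
  "cn_seq V E xs \<longleftrightarrow> distinct xs \<and> set xs \<subseteq> V \<and>
     (\<forall>i < length xs. closed_nbhd V E (xs ! i) - (\<Union>j<i. closed_nbhd V E (xs ! j)) \<noteq> {})"

definition grundy_dom_number :: "'a set \<Rightarrow> ('a \<Rightarrow> 'a \<Rightarrow> bool) \<Rightarrow> nat" where
  "grundy_dom_number V E = Max (length ` {xs. cn_seq V E xs})"

definition grundy_dominating_set :: "'a set \<Rightarrow> ('a \<Rightarrow> 'a \<Rightarrow> bool) \<Rightarrow> 'a set \<Rightarrow> bool" where
  "grundy_dominating_set V E A \<longleftrightarrow>
     (\<exists>xs. cn_seq V E xs \<and> length xs = grundy_dom_number V E \<and> set xs = A)"

definition automorphism :: "'a set \<Rightarrow> ('a \<Rightarrow> 'a \<Rightarrow> bool) \<Rightarrow> ('a \<Rightarrow> 'a) \<Rightarrow> bool" where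
  "automorphism V E \<phi> \<longleftrightarrow> bij_betw \<phi> V V \<and>
     (\<forall>u\<in>V. \<forall>v\<in>V. E u v \<longleftrightarrow> E (\<phi> u) (\<phi> v))"

definition iso_unique_grundy :: "'a set \<Rightarrow> ('a \<Rightarrow> 'a \<Rightarrow> bool) \<Rightarrow> bool" where
  "iso_unique_grundy V E \<longleftrightarrow>
     (\<forall>A B. grundy_dominating_set V E A \<and> grundy_dominating_set V E B \<longrightarrow>
        (\<exists>\<phi>. automorphism V E \<phi> \<and> \<phi> ` A = B))"

definition connected_component :: "'a set \<Rightarrow> ('a \<Rightarrow> 'a \<Rightarrow> bool) \<Rightarrow> 'a set \<Rightarrow> bool" where
  "connected_component V E C \<longleftrightarrow> (\<exists>u\<in>V. C = {v \<in> V. E\<^sup>*\<^sup>* u v})"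

definition is_complete :: "('a \<Rightarrow> 'a \<Rightarrow> bool) \<Rightarrow> 'a set \<Rightarrow> bool" where
  "is_complete E C \<longleftrightarrow> (\<forall>u\<in>C. \<forall>v\<in>C. u \<noteq> v \<longrightarrow> E u v)"

end

theory Submission
  imports Defs
begin

definition epairs :: "('a \<Rightarrow> 'a \<Rightarrow> bool) \<Rightarrow> 'a set \<Rightarrow> ('a \<times> 'a) set" where
  "epairs E A = {(a,b). a \<in> A \<and> b \<in> A \<and> E a b}"

locale sgraph =
  fixes V :: "'a set" and E :: "'a \<Rightarrow> 'a \<Rightarrow> bool"
  assumes g: "graph V E"
begin

lemma fin: "finite V" and inV: "E u v \<Longrightarrow> u \<in> V \<and> v \<in> V"
  and sym: "E u v \<Longrightarrow> E v u" and irr: "\<not> E v v"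
  using g unfolding graph_def by auto

lemma mem_N: "w \<in> closed_nbhd V E v \<longleftrightarrow> w = v \<or> (w \<in> V \<and> E v w)"
  unfolding closed_nbhd_def open_nbhd_def by auto

lemma cn_nil: "cn_seq V E []" unfolding cn_seq_def by auto

lemma cn_snoc: "cn_seq V E (xs @ [x]) \<longleftrightarrow> cn_seq V E xs \<and> x \<in> V \<and> x \<notin> set xs \<and>
   \<not> closed_nbhd V E x \<subseteq> (\<Union>y\<in>set xs. closed_nbhd V E y)"
proof -
  have U: "(\<Union>j<i. closed_nbhd V E ((xs@[x]) ! j)) = (\<Union>j<i. closed_nbhd V E (xs ! j))"
    if "i \<le> length xs" for i
    using that by (auto simp: nth_append)
  have U2: "(\<Union>j<length xs. closed_nbhd V E (xs ! j)) = (\<Union>y\<in>set xs. closed_nbhd V E y)"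
    by (auto simp: set_conv_nth)
  have Q: "(\<forall>i<length (xs@[x]). R i) \<longleftrightarrow> (\<forall>i<length xs. R i) \<and> R (length xs)" for R
    by (auto simp: less_Suc_eq)
  have Q2: "(\<forall>i<length xs. closed_nbhd V E ((xs@[x]) ! i) - (\<Union>j<i. closed_nbhd V E ((xs@[x]) ! j)) \<noteq> {})
     \<longleftrightarrow> (\<forall>i<length xs. closed_nbhd V E (xs ! i) - (\<Union>j<i. closed_nbhd V E (xs ! j)) \<noteq> {})"
    using U by (auto simp: nth_append)
  show ?thesis
    unfolding cn_seq_def Q Q2 using U[of "length xs"] U2 by auto
qed

lemma cn_len: "cn_seq V E xs \<Longrightarrow> length xs \<le> card V"
  unfolding cn_seq_def using fin by (metis card_mono distinct_card)

lemma cn_fin: "finite {xs. cn_seq V E xs}"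
proof -
  have "{xs. cn_seq V E xs} \<subseteq> {xs. set xs \<subseteq> V \<and> length xs \<le> card V}"
    using cn_len unfolding cn_seq_def by auto
  then show ?thesis using finite_lists_length_le[OF fin] finite_subset by blast
qed

lemma le_gdn: "cn_seq V E xs \<Longrightarrow> length xs \<le> grundy_dom_number V E"
  unfolding grundy_dom_number_def by (rule Max_ge) (use cn_fin in auto)

lemma ex_grundy: "\<exists>xs. cn_seq V E xs \<and> length xs = grundy_dom_number V E"
proof -
  have "grundy_dom_number V E \<in> length ` {xs. cn_seq V E xs}"
    unfolding grundy_dom_number_def by (rule Max_in) (use cn_fin cn_nil in auto)
  then show ?thesis by auto
qed

lemma maximal:
  assumes "cn_seq V E xs" "length xs = grundy_dom_number V E" "w \<in> V"
  shows "\<exists>y\<in>set xs. w \<in> closed_nbhd V E y"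
proof (rule ccontr)
  assume a: "\<not> ?thesis"
  have "w \<in> closed_nbhd V E w" using mem_N by auto
  then have "w \<notin> set xs" using a by auto
  then have "cn_seq V E (xs@[w])" using cn_snoc assms a \<open>w \<in> closed_nbhd V E w\<close> by blast
  then have "length (xs@[w]) \<le> grundy_dom_number V E" by (rule le_gdn)
  with assms(2) show False by simp
qed

lemma cn_filter: "cn_seq V E xs \<Longrightarrow> cn_seq V E (filter P xs)"
proof (induction xs rule: rev_induct)
  case Nil then show ?case by (simp add: cn_nil)
next
  case (snoc x xs)
  then have h: "cn_seq V E xs" "x \<in> V" "x \<notin> set xs"
    "\<not> closed_nbhd V E x \<subseteq> (\<Union>y\<in>set xs. closed_nbhd V E y)" using cn_snoc by auto
  show ?case
  proof (cases "P x")
    case True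
    have "\<not> closed_nbhd V E x \<subseteq> (\<Union>y\<in>set (filter P xs). closed_nbhd V E y)" using h(4) by auto
    then show ?thesis using True snoc.IH h cn_snoc by auto
  next
    case False then show ?thesis using snoc.IH h by simp
  qed
qed

lemma cn_append:
  assumes "cn_seq V E xs" "cn_seq V E ys"
    "\<And>x y. x \<in> set xs \<Longrightarrow> y \<in> set ys \<Longrightarrow> closed_nbhd V E x \<inter> closed_nbhd V E y = {}"
  shows "cn_seq V E (xs @ ys)"
  using assms(2,3)
proof (induction ys rule: rev_induct)
  case Nil then show ?case using assms(1) by simp
next
  case (snoc y ys)
  from snoc.prems(1) have h: "cn_seq V E ys" "y \<in> V" "y \<notin> set ys"
    "\<not> closed_nbhd V E y \<subseteq> (\<Union>z\<in>set ys. closed_nbhd V E z)" using cn_snoc by auto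
  have IH: "cn_seq V E (xs @ ys)" using snoc.IH h(1) snoc.prems(2) by auto
  have yy: "y \<in> closed_nbhd V E y" using mem_N by auto
  have "y \<notin> set xs" using snoc.prems(2)[of y y] yy by auto
  obtain f where f: "f \<in> closed_nbhd V E y" "f \<notin> (\<Union>z\<in>set ys. closed_nbhd V E z)" using h(4) by auto
  have "f \<notin> (\<Union>z\<in>set xs. closed_nbhd V E z)" using snoc.prems(2) f(1) by auto
  then have "\<not> closed_nbhd V E y \<subseteq> (\<Union>z\<in>set (xs@ys). closed_nbhd V E z)" using f by auto
  then show ?case using cn_snoc[of "xs@ys" y] IH h \<open>y \<notin> set xs\<close> by auto
qed

lemma epairs_aut:
  assumes "automorphism V E \<phi>" "A \<subseteq> V"
  shows "card (epairs E (\<phi> ` A)) = card (epairs E A)"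
proof -
  have bij: "bij_betw \<phi> V V" and pres: "\<forall>u\<in>V. \<forall>v\<in>V. E u v \<longleftrightarrow> E (\<phi> u) (\<phi> v)"
    using assms(1) unfolding automorphism_def by auto
  have "epairs E (\<phi> ` A) = map_prod \<phi> \<phi> ` epairs E A"
    using pres assms(2) unfolding epairs_def by (auto simp: image_iff)
  moreover have "inj_on (map_prod \<phi> \<phi>) (epairs E A)"
  proof -
    have "inj_on \<phi> V" using bij bij_betw_imp_inj_on by blast
    then show ?thesis using assms(2) unfolding epairs_def inj_on_def by auto
  qed
  ultimately show ?thesis by (simp add: card_image)
qed

lemma sym_rt: "E\<^sup>*\<^sup>* a b \<Longrightarrow> E\<^sup>*\<^sup>* b a"
proof (induction rule: rtranclp_induct)
  case base then show ?case by simp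
next
  case (step b c) then show ?case using sym by (meson converse_rtranclp_into_rtranclp)
qed

lemma forward:
  assumes iso: "iso_unique_grundy V E" and u: "u \<in> V"
  shows "is_complete E {v \<in> V. E\<^sup>*\<^sup>* u v}"
proof -
  define C where "C = {v \<in> V. E\<^sup>*\<^sup>* u v}"
  define \<gamma> where "\<gamma> = grundy_dom_number V E"
  have Cclos: "v \<in> C \<Longrightarrow> E v w \<Longrightarrow> w \<in> C" for v w
    unfolding C_def using inV by (auto intro: rtranclp.rtrancl_into_rtrancl)
  have Cclos2: "w \<in> C \<Longrightarrow> E v w \<Longrightarrow> v \<in> C" for v w using Cclos sym by blast
  have NC: "v \<in> C \<Longrightarrow> t \<in> closed_nbhd V E v \<Longrightarrow> t \<in> C" for v t using Cclos mem_N by auto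
  have NC2: "x \<notin> C \<Longrightarrow> t \<in> closed_nbhd V E x \<Longrightarrow> t \<notin> C" for x t using Cclos2 mem_N by auto
  obtain S where S: "cn_seq V E S" "length S = \<gamma>" using ex_grundy \<gamma>_def by auto
  define xs where "xs = filter (\<lambda>v. v \<notin> C) S"
  define ys where "ys = filter (\<lambda>v. v \<in> C) S"
  have T: "cn_seq V E (xs @ ys)"
  proof (rule cn_append)
    show "cn_seq V E xs" using cn_filter S(1) xs_def by auto
    show "cn_seq V E ys" using cn_filter S(1) ys_def by auto
    fix x y assume "x \<in> set xs" "y \<in> set ys"
    then have "x \<notin> C" "y \<in> C" using xs_def ys_def by auto
    then show "closed_nbhd V E x \<inter> closed_nbhd V E y = {}" using NC NC2 by blast
  qed
  have lenT: "length (xs @ ys) = \<gamma>"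
    using sum_length_filter_compl[of "\<lambda>v. v \<in> C" S] S(2) xs_def ys_def by simp
  have "u \<in> C" using u C_def by simp
  obtain s where s: "s \<in> set S" "u \<in> closed_nbhd V E s" using maximal S u \<gamma>_def by blast
  hence "s \<in> C" using \<open>u \<in> C\<close> mem_N Cclos2 by auto
  hence "ys \<noteq> []" using s ys_def by (metis filter_empty_conv)
  then obtain ys0 z where yz: "ys = ys0 @ [z]" using rev_exhaust by blast
  define P where "P = xs @ ys0"
  define D where "D = (\<Union>a\<in>set P. closed_nbhd V E a)"
  have TP: "xs @ ys = P @ [z]" using yz P_def by simp
  from T have h: "cn_seq V E P" "z \<in> V" "z \<notin> set P" "\<not> closed_nbhd V E z \<subseteq> D"
    unfolding TP D_def cn_snoc by auto
  have "z \<in> set ys" using yz by simp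
  hence "z \<in> C" using ys_def by simp
  obtain y where y: "y \<in> closed_nbhd V E z" "y \<notin> D" using h(4) by auto
  have yC: "y \<in> C" using NC y(1) \<open>z \<in> C\<close> by blast
  have yV: "y \<in> V" using mem_N y h(2) by auto
  have lenP: "Suc (length P) = \<gamma>" using lenT TP by simp
  have good: "cn_seq V E (P @ [w]) \<and> length (P @ [w]) = \<gamma>"
    if "w \<in> V" "\<not> closed_nbhd V E w \<subseteq> D" for w
  proof -
    have "w \<notin> set P" using that(2) D_def by auto
    then show ?thesis using cn_snoc h that lenP by (simp add: D_def)
  qed
  have gds: "grundy_dominating_set V E (insert w (set P))"
    if "w \<in> V" "\<not> closed_nbhd V E w \<subseteq> D" for w
    using good[OF that] unfolding grundy_dominating_set_def \<gamma>_def
    by (intro exI[of _ "P@[w]"]) auto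
  have PV: "set P \<subseteq> V" using h(1) unfolding cn_seq_def by auto
  have finE: "finite (epairs E A)" if "A \<subseteq> V" for A
  proof -
    have "epairs E A \<subseteq> V \<times> V" using that unfolding epairs_def by auto
    then show ?thesis using fin finite_subset by blast
  qed
  have ey: "epairs E (insert y (set P)) = epairs E (set P)"
  proof -
    have "\<not> E a y" if "a \<in> set P" for a using that y(2) yV mem_N D_def by auto
    then show ?thesis unfolding epairs_def using irr sym by blast
  qed
  have closU: "w \<notin> D" if "v \<in> V" "v \<notin> D" "E v w" for v w
  proof
    assume wD: "w \<in> D"
    have wV: "w \<in> V" using inV that(3) by auto
    have nw: "\<not> closed_nbhd V E w \<subseteq> D" using that sym mem_N by blast
    have nyy: "\<not> closed_nbhd V E y \<subseteq> D" using y(2) mem_N by auto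
    obtain \<phi> where \<phi>: "automorphism V E \<phi>" "\<phi> ` insert y (set P) = insert w (set P)"
      using iso gds[OF yV nyy] gds[OF wV nw] unfolding iso_unique_grundy_def by blast
    have c: "card (epairs E (insert w (set P))) = card (epairs E (set P))"
      using epairs_aut[OF \<phi>(1), of "insert y (set P)"] \<phi>(2) ey PV yV by simp
    from wD obtain a where a: "a \<in> set P" "w \<in> closed_nbhd V E a" using D_def by auto
    have "w \<notin> set P" using nw D_def by auto
    hence "E a w" using a mem_N by auto
    hence "(a,w) \<in> epairs E (insert w (set P)) - epairs E (set P)"
      using a \<open>w \<notin> set P\<close> by (simp add: epairs_def)
    moreover have "epairs E (set P) \<subseteq> epairs E (insert w (set P))" by (auto simp: epairs_def)
    ultimately have "card (epairs E (set P)) < card (epairs E (insert w (set P)))"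
      by (intro psubset_card_mono) (use finE PV wV in auto)
    with c show False by simp
  qed
  have inU: "v \<in> V \<and> v \<notin> D" if "E\<^sup>*\<^sup>* y v" for v
    using that
  proof (induction rule: rtranclp_induct)
    case base then show ?case using yV y(2) by simp
  next
    case (step a b) then show ?case using closU inV by blast
  qed
  have CU: "v \<in> V \<and> v \<notin> D" if "v \<in> C" for v
  proof -
    have "E\<^sup>*\<^sup>* y u" using yC C_def sym_rt by auto
    moreover have "E\<^sup>*\<^sup>* u v" using that C_def by auto
    ultimately show ?thesis using inU rtranclp_trans by metis
  qed
  show ?thesis unfolding is_complete_def C_def[symmetric]
  proof (intro ballI impI)
    fix v v' assume vv: "v \<in> C" "v' \<in> C" "v \<noteq> v'"
    have v: "v \<in> V" "\<not> closed_nbhd V E v \<subseteq> D" using CU[OF vv(1)] mem_N by auto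
    obtain s where s: "s \<in> set (P @ [v])" "v' \<in> closed_nbhd V E s"
      using maximal good[OF v] CU[OF vv(2)] \<gamma>_def by blast
    have "s \<notin> set P" using s(2) CU[OF vv(2)] D_def by auto
    hence "s = v" using s(1) by simp
    then show "E v v'" using s(2) vv(3) mem_N by auto
  qed
qed

lemma backward:
  assumes comp: "\<forall>C. connected_component V E C \<longrightarrow> is_complete E C"
  shows "iso_unique_grundy V E"
proof -
  define same where "same a b \<longleftrightarrow> a = b \<or> E a b" for a b
  have rt_same: "same a b" if a: "a \<in> V" "E\<^sup>*\<^sup>* a b" "b \<in> V" for a b
  proof -
    have "connected_component V E {v \<in> V. E\<^sup>*\<^sup>* a v}"
      unfolding connected_component_def using a by auto
    then have "is_complete E {v \<in> V. E\<^sup>*\<^sup>* a v}" using comp by auto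
    then show ?thesis unfolding is_complete_def same_def using a by auto
  qed
  have same_sym: "same a b \<Longrightarrow> same b a" for a b using sym same_def by auto
  have same_rt: "same a b \<Longrightarrow> E\<^sup>*\<^sup>* a b" for a b using same_def by auto
  have same_trans: "same a c" if "a \<in> V" "c \<in> V" "same a b" "same b c" for a b c
    using rt_same[OF that(1) _ that(2)] same_rt[OF that(3)] same_rt[OF that(4)]
    by (meson rtranclp_trans)
  have sameV: "a \<in> V \<Longrightarrow> same a b \<Longrightarrow> b \<in> V" for a b using inV same_def by auto
  have N_eq: "closed_nbhd V E a = {v \<in> V. same a v}" if "a \<in> V" for a
    using that mem_N same_def by auto
  have Neq: "closed_nbhd V E a = closed_nbhd V E b" if "a \<in> V" "b \<in> V" "same a b" for a b
    unfolding N_eq[OF that(1)] N_eq[OF that(2)] using that same_trans same_sym by blast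
  have grundy: "A \<subseteq> V \<and> (\<forall>x\<in>V. \<exists>a\<in>A. same x a) \<and> (\<forall>a\<in>A. \<forall>a'\<in>A. same a a' \<longrightarrow> a = a')"
    if gA: "grundy_dominating_set V E A" for A
  proof -
    obtain xs where xs: "cn_seq V E xs" "length xs = grundy_dom_number V E" "set xs = A"
      using gA unfolding grundy_dominating_set_def by auto
    have AV: "A \<subseteq> V" using xs unfolding cn_seq_def by auto
    have ex: "\<exists>a\<in>A. same x a" if xV: "x \<in> V" for x
    proof -
      obtain s where "s \<in> A" "x \<in> closed_nbhd V E s" using maximal[OF xs(1,2) xV] xs(3) by blast
      then have "same s x" unfolding same_def using mem_N by auto
      then show ?thesis using same_sym \<open>s \<in> A\<close> by blast
    qed
    have key: False if "i < length xs" "j < i"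
      "closed_nbhd V E (xs ! i) = closed_nbhd V E (xs ! j)" for i j
    proof -
      have "closed_nbhd V E (xs ! i) - (\<Union>k<i. closed_nbhd V E (xs ! k)) \<noteq> {}"
        using xs(1) that(1) unfolding cn_seq_def by auto
      moreover have "closed_nbhd V E (xs ! j) \<subseteq> (\<Union>k<i. closed_nbhd V E (xs ! k))"
        by (rule UN_upper) (use that(2) in simp)
      then have "closed_nbhd V E (xs ! i) \<subseteq> (\<Union>k<i. closed_nbhd V E (xs ! k))"
        using that(3) by simp
      ultimately show False by auto
    qed
    have uniq: "a = a'" if ua: "a \<in> A" "a' \<in> A" "same a a'" for a a'
    proof (rule ccontr)
      assume ne: "a \<noteq> a'"
      obtain i where i: "i < length xs" "xs ! i = a"
        using ua(1) xs(3) in_set_conv_nth by metis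
      obtain j where j: "j < length xs" "xs ! j = a'"
        using ua(2) xs(3) in_set_conv_nth by metis
      have ij: "i < length xs" "j < length xs" "xs ! i = a" "xs ! j = a'" using i j by auto
      have "a \<in> V" "a' \<in> V" using ua(1,2) AV by auto
      then have NN: "closed_nbhd V E a = closed_nbhd V E a'" using Neq ua(3) by blast
      have "i \<noteq> j" using ij ne by auto
      then show False
      proof (cases "j < i")
        case True then show ?thesis using key[of i j] ij NN by auto
      next
        case False then show ?thesis using key[of j i] ij NN \<open>i \<noteq> j\<close> by auto
      qed
    qed
    show ?thesis using AV ex uniq by blast
  qed
  show ?thesis unfolding iso_unique_grundy_def
  proof (intro allI impI)
    fix A B assume AB: "grundy_dominating_set V E A \<and> grundy_dominating_set V E B"
    have A: "A \<subseteq> V" "\<And>x. x \<in> V \<Longrightarrow> \<exists>a\<in>A. same x a" "\<And>a a'. a \<in> A \<Longrightarrow> a' \<in> A \<Longrightarrow> same a a' \<Longrightarrow> a = a'"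
      using grundy AB by blast+
    have B: "B \<subseteq> V" "\<And>x. x \<in> V \<Longrightarrow> \<exists>a\<in>B. same x a" "\<And>a a'. a \<in> B \<Longrightarrow> a' \<in> B \<Longrightarrow> same a a' \<Longrightarrow> a = a'"
      using grundy AB by blast+
    define rA where "rA x = (THE a. a \<in> A \<and> same x a)" for x
    define rB where "rB x = (THE a. a \<in> B \<and> same x a)" for x
    have uA: "a = a'" if "x \<in> V" "a \<in> A" "same x a" "a' \<in> A" "same x a'" for x a a'
    proof -
      have "a \<in> V" "a' \<in> V" using that A(1) by auto
      then have "same a a'" using same_trans[of a a' x] same_sym[OF that(3)] that(5) by blast
      then show ?thesis using A(3) that(2,4) by blast
    qed
    have rA: "rA x \<in> A \<and> same x (rA x)" if xV: "x \<in> V" for x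
    proof -
      obtain a where a: "a \<in> A" "same x a" using A(2)[OF xV] by blast
      have "\<exists>!a. a \<in> A \<and> same x a"
        by (rule ex1I[of _ a]) (use a uA[OF xV] in blast)+
      then show ?thesis unfolding rA_def by (rule theI')
    qed
    have rA_eq: "rA x = a" if "x \<in> V" "a \<in> A" "same x a" for x a
      using rA[OF that(1)] that uA by blast
    have uB: "a = a'" if "x \<in> V" "a \<in> B" "same x a" "a' \<in> B" "same x a'" for x a a'
    proof -
      have "a \<in> V" "a' \<in> V" using that B(1) by auto
      then have "same a a'" using same_trans[of a a' x] same_sym[OF that(3)] that(5) by blast
      then show ?thesis using B(3) that(2,4) by blast
    qed
    have rB: "rB x \<in> B \<and> same x (rB x)" if xV: "x \<in> V" for x
    proof -
      obtain a where a: "a \<in> B" "same x a" using B(2)[OF xV] by blast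
      have "\<exists>!a. a \<in> B \<and> same x a"
        by (rule ex1I[of _ a]) (use a uB[OF xV] in blast)+
      then show ?thesis unfolding rB_def by (rule theI')
    qed
    have rB_eq: "rB x = a" if "x \<in> V" "a \<in> B" "same x a" for x a
      using rB[OF that(1)] that uB by blast
    define \<phi> where "\<phi> x = (if x \<in> A then rB x else if x \<in> B then rA x else x)" for x
    have \<phi>1: "\<phi> x \<in> V \<and> same x (\<phi> x)" if "x \<in> V" for x
      using rA[OF that] rB[OF that] A(1) B(1) that same_def unfolding \<phi>_def by auto
    have \<phi>2: "\<phi> (\<phi> x) = x" if "x \<in> V" for x
    proof (cases "x \<in> A")
      case True
      define b where "b = rB x"
      have b: "b \<in> B" "same x b" "b \<in> V" using rB[OF that] B(1) b_def by auto
      show ?thesis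
      proof (cases "b \<in> A")
        case True
        then have "b = x" using A(3) \<open>x \<in> A\<close> b same_sym by blast
        then show ?thesis using \<open>x \<in> A\<close> b_def unfolding \<phi>_def by simp
      next
        case False
        then have "rA b = x" using rA_eq[of b x] b \<open>x \<in> A\<close> same_sym by blast
        then show ?thesis using \<open>x \<in> A\<close> False b b_def unfolding \<phi>_def by simp
      qed
    next
      case False
      show ?thesis
      proof (cases "x \<in> B")
        case True
        define a where "a = rA x"
        have a: "a \<in> A" "same x a" "a \<in> V" using rA[OF that] A(1) a_def by auto
        have "rB a = x" using rB_eq[of a x] a True same_sym by blast
        then show ?thesis using False True a a_def unfolding \<phi>_def by simp
      next
        case False2: False
        then show ?thesis using False unfolding \<phi>_def by simp
      qed
    qed
    have bij: "bij_betw \<phi> V V"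
      by (rule bij_betw_byWitness[where f'=\<phi>]) (use \<phi>1 \<phi>2 in auto)
    have inj: "inj_on \<phi> V" using bij bij_betw_imp_inj_on by blast
    have Esame: "E u v \<longleftrightarrow> u \<noteq> v \<and> same u v" if "u \<in> V" "v \<in> V" for u v
      using irr same_def by auto
    have pres: "E u v \<longleftrightarrow> E (\<phi> u) (\<phi> v)" if "u \<in> V" "v \<in> V" for u v
    proof -
      have "u \<noteq> v \<longleftrightarrow> \<phi> u \<noteq> \<phi> v" using inj that inj_on_def by metis
      moreover have "same u v \<longleftrightarrow> same (\<phi> u) (\<phi> v)"
      proof
        assume "same u v"
        then have "same (\<phi> u) v" using same_trans[of "\<phi> u" v u] same_sym \<phi>1[OF that(1)] that by blast
        then show "same (\<phi> u) (\<phi> v)" using same_trans[of "\<phi> u" "\<phi> v" v] \<phi>1[OF that(1)] \<phi>1[OF that(2)] by blast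
      next
        assume "same (\<phi> u) (\<phi> v)"
        then have "same u (\<phi> v)" using same_trans[of u "\<phi> v" "\<phi> u"] \<phi>1[OF that(1)] \<phi>1[OF that(2)] that by blast
        then show "same u v" using same_trans[of u v "\<phi> v"] same_sym \<phi>1[OF that(2)] that by blast
      qed
      ultimately show ?thesis using Esame that \<phi>1 by auto
    qed
    have img: "\<phi> ` A = B"
    proof
      show "\<phi> ` A \<subseteq> B" using rB A(1) unfolding \<phi>_def by auto
      show "B \<subseteq> \<phi> ` A"
      proof
        fix b assume b: "b \<in> B"
        have bV: "b \<in> V" using b B(1) by auto
        define a where "a = rA b"
        have a: "a \<in> A" "same b a" "a \<in> V" using rA[OF bV] A(1) a_def by auto
        have "\<phi> a = b" using rB_eq[of a b] a b same_sym unfolding \<phi>_def by auto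
        then show "b \<in> \<phi> ` A" using a by auto
      qed
    qed
    show "\<exists>\<phi>. automorphism V E \<phi> \<and> \<phi> ` A = B"
      using bij pres img unfolding automorphism_def by blast
  qed
qed

end

theorem theorem4p4:
  fixes V :: "'a set" and E :: "'a \<Rightarrow> 'a \<Rightarrow> bool"
  assumes "graph V E"
  shows "iso_unique_grundy V E \<longleftrightarrow>
           (\<forall>C. connected_component V E C \<longrightarrow> is_complete E C)"
proof -
  interpret sgraph V E by unfold_locales (rule assms)
  show ?thesis using forward backward unfolding connected_component_def by blast
qed

end
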